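(* Let $a\in[-1,1)$. Let $M_3=\big(\int_{-1}^1t^{i+j}\,dt\big)_{0\le i,j\le3}$ and $v_a^{(3)}=\big(1-a,\ \tfrac{1-a^2}{2},\ \tfrac{1-a^3}{3},\ \tfrac{1-a^4}{4}\big)^\top$. Then the (unique) solution $z$ of $M_3z=v_a^{(3)}$ belongs to $(0,\infty)^4$ if and only if $\frac1{\sqrt5}<a<\frac{\sqrt{105}-5}{10}$. *)

theory Defs
  imports "HOL-Analysis.Analysis" "HOL-Library.Numeral_Type"
begin

text \<open>Indices 0..3 of vectors in real^4: the index type 4 is bit0 (bit0 num1),
  whose elements are represented by the integers 0,1,2,3.\<close>
definition idx4 :: "4 \<Rightarrow> nat" where
  "idx4 i = nat (Rep_bit0 i)"

definition M3 :: "real^4^4" where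
  "M3 = (\<chi> i j. integral {-1..1} (\<lambda>t::real. t ^ (idx4 i + idx4 j)))"

definition v3 :: "real \<Rightarrow> real^4" where
  "v3 a = (\<chi> i. (1 - a ^ (idx4 i + 1)) / real (idx4 i + 1))"

end

theory Submission
  imports Defs
begin
lemma idx: "idx4 1 = 1" "idx4 2 = 2" "idx4 3 = 3" "idx4 4 = 0"
  by (simp_all add: idx4_def bit0.Rep_numeral bit0.Rep_1)
lemma intpow: "integral {-1..1} (\<lambda>t::real. t ^ k) = (1 - (-1)^Suc k) / Suc k"
proof -
  have "((\<lambda>t::real. t ^ k) has_integral ((\<lambda>t. t^Suc k / Suc k) 1 - (\<lambda>t. t^Suc k / Suc k) (-1))) {-1..1}"
  proof (rule fundamental_theorem_of_calculus)
    fix x :: real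
    have "((\<lambda>t. t^Suc k / Suc k) has_real_derivative x^k) (at x within {-1..1})"
      by (intro derivative_eq_intros) (auto simp del: of_nat_Suc)
    thus "((\<lambda>t. t^Suc k / Suc k) has_vector_derivative x^k) (at x within {-1..1})"
      by (simp add: has_real_derivative_iff_has_vector_derivative)
  qed simp
  then have "integral {-1..1} (\<lambda>t::real. t ^ k) = (\<lambda>t. t^Suc k / Suc k) 1 - (\<lambda>t. t^Suc k / Suc k) (-1)"
    by (rule integral_unique)
  thus ?thesis by (simp add: diff_divide_distrib add_divide_distrib del: of_nat_Suc)
qed

lemma eqs: "M3 *v z = v3 a \<longleftrightarrow>
   (2*z$4 + 2/3*z$2 = 1-a \<and> 2/3*z$1 + 2/5*z$3 = (1-a^2)/2 \<and>
    2/3*z$4 + 2/5*z$2 = (1-a^3)/3 \<and> 2/5*z$1 + 2/7*z$3 = (1-a^4)/4)"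
proof -
  have h: "a*a = a^2" "a*a^2=a^3" "a*a^3=a^4" by algebra+
  show ?thesis
  unfolding vec_eq_iff forall_4 matrix_vector_mult_def UNIV_4 M3_def v3_def
  by (simp add: idx intpow algebra_simps h) (auto)
qed
lemma l1: "(a::real) > 0 \<Longrightarrow> 5*a^2 > 1 \<Longrightarrow> sqrt 5 * a > 1"
proof -
  assume "(a::real) > 0" "5*a^2 > 1"
  hence "sqrt 5 * a = sqrt (5*a^2)" by (simp add: real_sqrt_mult)
  also have "\<dots> > sqrt 1" using \<open>5*a^2 > 1\<close> by (simp only: real_sqrt_less_iff)
  finally show ?thesis by simp
qed
lemma l2: "(a::real) > 0 \<Longrightarrow> (10*a+5 < sqrt 105 \<longleftrightarrow> (10*a+5)^2 < 105)"
proof -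
  assume "a > 0"
  hence "10*a+5 = sqrt ((10*a+5)^2)" by simp
  hence "10*a+5 < sqrt 105 \<longleftrightarrow> sqrt ((10*a+5)^2) < sqrt 105" by simp
  also have "\<dots> \<longleftrightarrow> (10*a+5)^2 < 105" by (simp only: real_sqrt_less_iff)
  finally show ?thesis .
qed
lemma l3: "-1 < (a::real) \<Longrightarrow> a < 1 \<Longrightarrow> 1 - a^2 > 0"
proof -
  assume "-1 < a" "a < 1"
  hence "(1-a)*(1+a) > 0" by (intro mult_pos_pos) auto
  thus ?thesis by (simp add: algebra_simps power2_eq_square)
qed
lemma l4: "(a::real) > 0 \<Longrightarrow> a < 1 \<Longrightarrow> 5*a^2 > 1 \<Longrightarrow> 5*a^2+5*a-4 < 0 \<Longrightarrow> 1 - a^2 > 0 \<Longrightarrow> a^2 < 3/7 \<Longrightarrow>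
   2*(a-1)*(5*a^2+5*a-4)/16 > 0 \<and> (1-a^2)*(45/2 - 105/2*a^2)/16 > 0 \<and> 30*a*(1-a^2)/16 > 0 \<and> (1-a^2)*(175/2*a^2 - 35/2)/16 > 0"
proof -
  assume h: "(a::real) > 0" "a < 1" "5*a^2 > 1" "5*a^2+5*a-4 < 0" "1 - a^2 > 0" "a^2 < 3/7"
  have "2*(a-1)*(5*a^2+5*a-4) > 0" using h by (intro mult_neg_neg) auto
  moreover have "(1-a^2)*(45/2 - 105/2*a^2) > 0" using h by (intro mult_pos_pos) auto
  moreover have "30*a*(1-a^2) > 0" using h by (intro mult_pos_pos) auto
  moreover have "(1-a^2)*(175/2*a^2 - 35/2) > 0" using h by (intro mult_pos_pos) auto
  ultimately show ?thesis by simp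
qed

theorem lemma4p3:
  fixes a :: real
  assumes "-1 \<le> a" and "a < 1"
  shows "(\<exists>!z :: real^4. M3 *v z = v3 a) \<and>
         (\<forall>z :: real^4. M3 *v z = v3 a \<longrightarrow>
            ((\<forall>i. z $ i > 0) \<longleftrightarrow> (1 / sqrt 5 < a \<and> a < (sqrt 105 - 5) / 10)))"
proof -
  define z0 where "z0 = (8 - 18*a + 10*a^3)/16"
  define z1 where "z1 = (75*(1-a^2) - 105/2*(1-a^4))/16"
  define z2 where "z2 = 30*(a-a^3)/16"
  define z3 where "z3 = (175/2*(1-a^4) - 105*(1-a^2))/16"
  have sol: "M3 *v z = v3 a \<longleftrightarrow> z$4 = z0 \<and> z$1 = z1 \<and> z$2 = z2 \<and> z$3 = z3" for z
    unfolding eqs z0_def z1_def z2_def z3_def apply (rule iffI) apply (elim conjE, intro conjI) apply (simp add: field_simps; linarith?)+ done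
  define w :: "real^4" where "w = (\<chi> i. if i = 4 then z0 else if i = 1 then z1 else if i = 2 then z2 else z3)"
  have w: "M3 *v w = v3 a" unfolding sol w_def by simp
  have uniq: "M3 *v z = v3 a \<Longrightarrow> z = w" for z
  proof -
    assume "M3 *v z = v3 a"
    hence "z$4 = z0 \<and> z$1 = z1 \<and> z$2 = z2 \<and> z$3 = z3" using sol by blast
    thus "z = w" unfolding w_def vec_eq_iff forall_4 by simp
  qed
  have pos: "(z0 > 0 \<and> z1 > 0 \<and> z2 > 0 \<and> z3 > 0) \<longleftrightarrow> (1 / sqrt 5 < a \<and> a < (sqrt 105 - 5) / 10)"
  proof -
    have f0: "z0 = 2*(a-1)*(5*a^2+5*a-4)/16" unfolding z0_def by algebra
    have f1: "z1 = (1-a^2)*(45/2 - 105/2*a^2)/16" unfolding z1_def by algebra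
    have f2: "z2 = 30*a*(1-a^2)/16" unfolding z2_def by algebra
    have f3: "z3 = (1-a^2)*(175/2*a^2 - 35/2)/16" unfolding z3_def by algebra
    have s5: "1 / sqrt 5 < a \<longleftrightarrow> a > 0 \<and> 5*a^2 > 1"
    proof
      assume h: "1 / sqrt 5 < a"
      have "0 < 1 / sqrt 5" by simp
      hence ap: "a > 0" using h by linarith
      have "1 < a * sqrt 5" using h by (simp add: field_simps)
      hence "1^2 < (a * sqrt 5)^2" by (intro power_strict_mono) auto
      thus "a > 0 \<and> 5*a^2 > 1" using ap by (simp add: power_mult_distrib)
    next
      assume h: "a > 0 \<and> 5*a^2 > 1"
      have "(sqrt 5 * a)^2 > 1" using h by (simp add: power_mult_distrib)
      hence "sqrt 5 * a > 1" using h
        using l1 by simp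

      thus "1 / sqrt 5 < a" by (simp add: field_simps)
    qed
    have s105: "a > 0 \<Longrightarrow> (a < (sqrt 105 - 5) / 10 \<longleftrightarrow> 5*a^2+5*a-4 < 0)"
    proof -
      assume ap: "a > 0"
      have "a < (sqrt 105 - 5) / 10 \<longleftrightarrow> 10*a+5 < sqrt 105" by auto
      also have "\<dots> \<longleftrightarrow> (10*a+5)^2 < 105"
        using ap l2 by simp
      also have "\<dots> \<longleftrightarrow> 5*a^2+5*a-4 < 0" by (simp add: power2_eq_square algebra_simps) linarith
      finally show ?thesis .
    qed
    have a2: "1 - a^2 > 0 \<longleftrightarrow> a > -1"
    proof
      assume "a > -1" thus "1 - a^2 > 0" using assms l3 by simp
    next
      assume "1 - a^2 > 0" thus "a > -1" using assms by (cases "a = -1") auto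
    qed
    show ?thesis
    proof
      assume h: "z0 > 0 \<and> z1 > 0 \<and> z2 > 0 \<and> z3 > 0"
      have am: "a > -1" using h f2 assms by (cases "a = -1") auto
      hence p: "1 - a^2 > 0" using a2 by simp
      have ap: "a > 0" using h f2 p by (simp add: zero_less_mult_iff)
      have "175/2*a^2 - 35/2 > 0" using h f3 p by (simp add: zero_less_mult_iff)
      hence "5*a^2 > 1" by simp
      moreover have "5*a^2+5*a-4 < 0" using h f0 assms by (simp add: zero_less_mult_iff)
      ultimately show "1 / sqrt 5 < a \<and> a < (sqrt 105 - 5) / 10" using s5 s105 ap by simp
    next
      assume h: "1 / sqrt 5 < a \<and> a < (sqrt 105 - 5) / 10"
      have ap: "a > 0" and a5: "5*a^2 > 1" using h s5 by auto
      have q: "5*a^2+5*a-4 < 0" using h s105 ap by simp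
      have p: "1 - a^2 > 0" using a2 ap by simp
      have "a^2 < 3/7"
      proof -
        have "a^2 > 1/5" using a5 by simp
        have "a > 2/5"
        proof (rule ccontr)
          assume "\<not> a > 2/5"
          hence "a^2 \<le> (2/5)^2" using ap by (intro power_mono) auto
          thus False using a5 unfolding power2_eq_square by linarith
        qed
        thus ?thesis using q by simp
      qed
      show "z0 > 0 \<and> z1 > 0 \<and> z2 > 0 \<and> z3 > 0"
        unfolding f0 f1 f2 f3 using p ap a5 q assms \<open>a^2 < 3/7\<close>
        using l4[OF ap assms(2) a5 q p] by simp
    qed
  qed
  show ?thesis
  proof
    show "\<exists>!z :: real^4. M3 *v z = v3 a" using w uniq by blast
  next
    show "\<forall>z :: real^4. M3 *v z = v3 a \<longrightarrow>
            ((\<forall>i. z $ i > 0) \<longleftrightarrow> (1 / sqrt 5 < a \<and> a < (sqrt 105 - 5) / 10))"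
    proof (intro allI impI)
      fix z :: "real^4" assume "M3 *v z = v3 a"
      hence "z$4 = z0 \<and> z$1 = z1 \<and> z$2 = z2 \<and> z$3 = z3" using sol by blast
      thus "(\<forall>i. z $ i > 0) \<longleftrightarrow> (1 / sqrt 5 < a \<and> a < (sqrt 105 - 5) / 10)"
        unfolding forall_4 using pos by auto
    qed
  qed
qed
end
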